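(* Let $L$ be a completely regular frame. Then $\overline{\mathrm{H}}(L)$ (with the inclusion $\overline{\mathrm{C}}(L)\subseteq\overline{\mathrm{H}}(L)$) is the Dedekind–MacNeille completion of $\overline{\mathrm{C}}(L)$.
   Context: $\mathbb{Q}$ is the rationals; $a^\ast$ is the pseudocomplement. The frame $\mathfrak{L}(\overline{\mathbb{IR}})$ is presented by generators $(r,\textsf{---})$, $(\textsf{---},s)$ ($r,s\in\mathbb{Q}$) subject to (r1) $(r,\textsf{---})\wedge(\textsf{---},s)=0$ whenever $r\ge s$; (r3) $(r,\textsf{---})=\bigvee_{s>r}(s,\textsf{---})$; (r4) $(\textsf{---},s)=\bigvee_{r<s}(\textsf{---},r)$. $\overline{\mathrm{IC}}(L)$ is the set of frame homomorphisms $\mathfrak{L}(\overline{\mathbb{IR}})\to L$, ordered by $f\le g$ iff $f(r,\textsf{---})\le g(r,\textsf{---})$ and $g(\textsf{---},s)\le f(\textsf{---},s)$ for all $r,s$. $\overline{\mathrm{C}}(L)$ (extended continuous real functions) is the subposet of those $f$ with $f(r,\textsf{---})\vee f(\textsf{---},s)=1$ whenever $r<s$ (equivalently, homomorphisms from the frame of extended reals). $\overline{\mathrm{H}}(L)$ is the subposet of $f\in\overline{\mathrm{IC}}(L)$ with $f(r,\textsf{---})^\ast\le f(\textsf{---},s)$ and $f(\textsf{---},s)^\ast\le f(r,\textsf{---})$ for all $r<s$. A Dedekind–MacNeille completion of a poset $P$ is a join- and meet-dense order embedding of $P$ into a complete lattice. A frame is completely regular if every $a$ is the join of the elements completely below it.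 *)

theory Defs
  imports Complex_Main
begin

definition is_frame :: "('a::complete_lattice) itself \<Rightarrow> bool" where
  "is_frame _ \<longleftrightarrow> (\<forall>(a::'a) S. inf a (Sup S) = Sup ((\<lambda>s. inf a s) ` S))"

definition pcompl :: "'a::complete_lattice \<Rightarrow> 'a" where
  "pcompl a = Sup {x. inf x a = bot}"

definition rather_below :: "'a::complete_lattice \<Rightarrow> 'a \<Rightarrow> bool" where
  "rather_below a b \<longleftrightarrow> sup (pcompl a) b = top"

definition completely_below :: "'a::complete_lattice \<Rightarrow> 'a \<Rightarrow> bool" where
  "completely_below a b \<longleftrightarrow>
     (\<exists>c :: rat \<Rightarrow> 'a. c 0 = a \<and> c 1 = b \<and>
        (\<forall>p q. 0 \<le> p \<longrightarrow> p < q \<longrightarrow> q \<le> 1 \<longrightarrow> rather_below (c p) (c q)))"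

definition completely_regular :: "('a::complete_lattice) itself \<Rightarrow> bool" where
  "completely_regular _ \<longleftrightarrow> (\<forall>a::'a. a = Sup {b. completely_below b a})"

text \<open>By the universal property of the presentation of the frame L(IR-bar),
  a frame homomorphism f : L(IR-bar) \<rightarrow> L is the same as an assignment of the
  generators, u r = f(r,-) and d s = f(-,s), satisfying the relations (r1),(r3),(r4)
  in L.  We represent f by the pair (u, d).\<close>
type_synonym 'a ic = "(rat \<Rightarrow> 'a) \<times> (rat \<Rightarrow> 'a)"

definition IC :: "('a::complete_lattice) ic set" where
  "IC = {(u, d). (\<forall>r s. s \<le> r \<longrightarrow> inf (u r) (d s) = bot)
                \<and> (\<forall>r. u r = Sup (u ` {s. r < s}))
                \<and> (\<forall>s. d s = Sup (d ` {r. r < s}))}"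

definition le_IC :: "('a::complete_lattice) ic \<Rightarrow> 'a ic \<Rightarrow> bool" where
  "le_IC f g \<longleftrightarrow> (\<forall>r. fst f r \<le> fst g r) \<and> (\<forall>s. snd g s \<le> snd f s)"

definition Cbar :: "('a::complete_lattice) ic set" where
  "Cbar = {f \<in> IC. \<forall>r s. r < s \<longrightarrow> sup (fst f r) (snd f s) = top}"

definition Hbar :: "('a::complete_lattice) ic set" where
  "Hbar = {f \<in> IC. \<forall>r s. r < s \<longrightarrow>
              pcompl (fst f r) \<le> snd f s \<and> pcompl (snd f s) \<le> fst f r}"

definition is_lub_in :: "('b \<Rightarrow> 'b \<Rightarrow> bool) \<Rightarrow> 'b set \<Rightarrow> 'b set \<Rightarrow> 'b \<Rightarrow> bool" where
  "is_lub_in le Q S x \<longleftrightarrow> x \<in> Q \<and> (\<forall>y\<in>S. le y x) \<and> (\<forall>z\<in>Q. (\<forall>y\<in>S. le y z) \<longrightarrow> le x z)"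

definition is_glb_in :: "('b \<Rightarrow> 'b \<Rightarrow> bool) \<Rightarrow> 'b set \<Rightarrow> 'b set \<Rightarrow> 'b \<Rightarrow> bool" where
  "is_glb_in le Q S x \<longleftrightarrow> x \<in> Q \<and> (\<forall>y\<in>S. le x y) \<and> (\<forall>z\<in>Q. (\<forall>y\<in>S. le z y) \<longrightarrow> le z x)"

definition partial_order_on_carrier :: "('b \<Rightarrow> 'b \<Rightarrow> bool) \<Rightarrow> 'b set \<Rightarrow> bool" where
  "partial_order_on_carrier le Q \<longleftrightarrow>
     (\<forall>x\<in>Q. le x x) \<and> (\<forall>x\<in>Q. \<forall>y\<in>Q. le x y \<longrightarrow> le y x \<longrightarrow> x = y)
     \<and> (\<forall>x\<in>Q. \<forall>y\<in>Q. \<forall>z\<in>Q. le x y \<longrightarrow> le y z \<longrightarrow> le x z)"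

definition complete_lattice_on :: "('b \<Rightarrow> 'b \<Rightarrow> bool) \<Rightarrow> 'b set \<Rightarrow> bool" where
  "complete_lattice_on le Q \<longleftrightarrow> partial_order_on_carrier le Q \<and>
     (\<forall>S\<subseteq>Q. (\<exists>x. is_lub_in le Q S x) \<and> (\<exists>x. is_glb_in le Q S x))"

definition dm_completion ::
  "('p \<Rightarrow> 'p \<Rightarrow> bool) \<Rightarrow> 'p set \<Rightarrow> ('q \<Rightarrow> 'q \<Rightarrow> bool) \<Rightarrow> 'q set \<Rightarrow> ('p \<Rightarrow> 'q) \<Rightarrow> bool" where
  "dm_completion leP P leQ Q e \<longleftrightarrow>
     complete_lattice_on leQ Q
     \<and> e ` P \<subseteq> Q
     \<and> (\<forall>x\<in>P. \<forall>y\<in>P. leP x y \<longleftrightarrow> leQ (e x) (e y))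
     \<and> (\<forall>q\<in>Q. is_lub_in leQ Q {e p | p. p \<in> P \<and> leQ (e p) q} q)
     \<and> (\<forall>q\<in>Q. is_glb_in leQ Q {e p | p. p \<in> P \<and> leQ q (e p)} q)"

end

theory Submission
  imports Defs
begin



lemma frame_law:
  assumes "is_frame TYPE('a::complete_lattice)"
  shows "inf (a::'a) (Sup S) = Sup ((\<lambda>s. inf a s) ` S)"
  using assms unfolding is_frame_def by blast

lemma inf_Sup_bot:
  assumes F: "is_frame TYPE('a::complete_lattice)"
    and "\<And>x. x \<in> X \<Longrightarrow> inf (y::'a) x = bot"
  shows "inf y (Sup X) = bot"
  using frame_law[OF F, of y X] assms(2) by (simp add: SUP_bot_conv)

lemma Sup_inf_bot:
  assumes F: "is_frame TYPE('a::complete_lattice)"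
    and "\<And>x. x \<in> X \<Longrightarrow> inf x (y::'a) = bot"
  shows "inf (Sup X) y = bot"
  using inf_Sup_bot[OF F, of X y] assms(2) by (simp add: inf_commute)

lemma Sup_Sup_bot:
  assumes F: "is_frame TYPE('a::complete_lattice)"
    and "\<And>x y. x \<in> X \<Longrightarrow> y \<in> Y \<Longrightarrow> inf x y = bot"
  shows "inf (Sup X) (Sup (Y::'a set)) = bot"
  by (rule Sup_inf_bot[OF F], rule inf_Sup_bot[OF F], simp add: assms)

lemma frame_inf_sup:
  assumes F: "is_frame TYPE('a::complete_lattice)"
  shows "inf (a::'a) (sup b c) = sup (inf a b) (inf a c)"
  using frame_law[OF F, of a "{b,c}"] by simp

lemma pc_inf:
  assumes F: "is_frame TYPE('a::complete_lattice)"
  shows "inf (pcompl a) (a::'a) = bot"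
  unfolding pcompl_def by (rule Sup_inf_bot[OF F]) auto

lemma pc_le: "inf x a = bot \<Longrightarrow> x \<le> pcompl a"
  unfolding pcompl_def by (rule Sup_upper) simp

lemma pc_anti:
  assumes F: "is_frame TYPE('a::complete_lattice)" and "a \<le> (b::'a)"
  shows "pcompl b \<le> pcompl a"
proof (rule pc_le)
  have "inf (pcompl b) a \<le> inf (pcompl b) b" using assms(2) by (simp add: le_infI2)
  then show "inf (pcompl b) a = bot" using pc_inf[OF F, of b] by (simp add: bot_unique)
qed

lemma sup_top_pc:
  assumes F: "is_frame TYPE('a::complete_lattice)" and "sup a b = (top::'a)"
  shows "pcompl a \<le> b"
proof -
  have "pcompl a = inf (pcompl a) (sup a b)" using assms(2) by simp
  also have "\<dots> = sup (inf (pcompl a) a) (inf (pcompl a) b)" by (rule frame_inf_sup[OF F])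
  also have "\<dots> = inf (pcompl a) b" using pc_inf[OF F, of a] by simp
  finally show ?thesis by (metis inf.cobounded2)
qed

lemma rb_le:
  assumes F: "is_frame TYPE('a::complete_lattice)" and "rather_below a (b::'a)"
  shows "a \<le> b"
proof -
  have "a = inf a (sup (pcompl a) b)" using assms(2) unfolding rather_below_def by simp
  also have "\<dots> = sup (inf a (pcompl a)) (inf a b)" by (rule frame_inf_sup[OF F])
  also have "\<dots> = inf a b" using pc_inf[OF F, of a] by (simp add: inf_commute)
  finally show ?thesis by (metis inf.cobounded2)
qed

lemma IC_iff: "f \<in> IC \<longleftrightarrow> (\<forall>r s. s \<le> r \<longrightarrow> inf (fst f r) (snd f s) = bot)
                \<and> (\<forall>r. fst f r = Sup (fst f ` {s. r < s}))
                \<and> (\<forall>s. snd f s = Sup (snd f ` {r. r < s}))"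
  unfolding IC_def by (cases f) (simp only: mem_Collect_eq prod.case fst_conv snd_conv)

lemma IC_r1: "f \<in> IC \<Longrightarrow> s \<le> r \<Longrightarrow> inf (fst f r) (snd f s) = bot"
  unfolding IC_iff by blast
lemma IC_r3: "f \<in> IC \<Longrightarrow> fst f r = Sup (fst f ` {s. r < s})"
  unfolding IC_iff by blast
lemma IC_r4: "f \<in> IC \<Longrightarrow> snd f s = Sup (snd f ` {r. r < s})"
  unfolding IC_iff by blast

lemma IC_fst_anti: "f \<in> IC \<Longrightarrow> r \<le> s \<Longrightarrow> fst f s \<le> fst f r"
proof (cases "r = s")
  case False
  assume "f \<in> IC" "r \<le> s"
  then have "fst f s \<le> Sup (fst f ` {s. r < s})" using False by (intro Sup_upper) auto
  also have "\<dots> = fst f r" using IC_r3[OF \<open>f \<in> IC\<close>, of r] by (rule sym)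
  finally show ?thesis .
qed simp

lemma IC_snd_mono: "f \<in> IC \<Longrightarrow> r \<le> s \<Longrightarrow> snd f r \<le> snd f s"
proof (cases "r = s")
  case False
  assume "f \<in> IC" "r \<le> s"
  then have "snd f r \<le> Sup (snd f ` {r. r < s})" using False by (intro Sup_upper) auto
  also have "\<dots> = snd f s" using IC_r4[OF \<open>f \<in> IC\<close>, of s] by (rule sym)
  finally show ?thesis .
qed simp

lemma Hbar_IC: "f \<in> Hbar \<Longrightarrow> f \<in> IC" by (simp add: Hbar_def)
lemma Hbar_1: "f \<in> Hbar \<Longrightarrow> r < s \<Longrightarrow> pcompl (fst f r) \<le> snd f s" by (simp add: Hbar_def)
lemma Hbar_2: "f \<in> Hbar \<Longrightarrow> r < s \<Longrightarrow> pcompl (snd f s) \<le> fst f r" by (simp add: Hbar_def)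

lemma Cbar_Hbar:
  assumes F: "is_frame TYPE('a::complete_lattice)"
  shows "Cbar \<subseteq> (Hbar :: 'a ic set)"
proof
  fix f :: "'a ic" assume f: "f \<in> Cbar"
  then have "f \<in> IC" by (simp add: Cbar_def)
  moreover have "pcompl (fst f r) \<le> snd f s \<and> pcompl (snd f s) \<le> fst f r" if "r < s" for r s
  proof -
    have "sup (fst f r) (snd f s) = top" using f that by (simp add: Cbar_def)
    moreover have "sup (snd f s) (fst f r) = top" using calculation by (simp add: sup_commute)
    ultimately show ?thesis using sup_top_pc[OF F] by blast
  qed
  ultimately show "f \<in> Hbar" by (simp add: Hbar_def)
qed

lemma lemma1:
  assumes F: "is_frame TYPE('a::complete_lattice)"
    and h: "h \<in> Hbar" and z: "z \<in> IC" and le: "\<And>r. fst h r \<le> (fst z r :: 'a)"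
  shows "snd z s \<le> snd h s"
proof -
  have "snd z t \<le> snd h s" if "t < s" for t
  proof -
    have "snd z t \<le> pcompl (fst z t)" using IC_r1[OF z, of t t] by (intro pc_le) (simp add: inf_commute)
    also have "\<dots> \<le> pcompl (fst h t)" by (rule pc_anti[OF F le])
    also have "\<dots> \<le> snd h s" by (rule Hbar_1[OF h that])
    finally show ?thesis .
  qed
  then have "Sup (snd z ` {t. t < s}) \<le> snd h s" by (auto intro!: Sup_least)
  then show ?thesis using IC_r4[OF z, of s] by (simp only:)
qed

lemma lemma2:
  assumes F: "is_frame TYPE('a::complete_lattice)"
    and z: "z \<in> Hbar" and h: "h \<in> IC" and le: "\<And>s. snd z s \<le> (snd h s :: 'a)"
  shows "fst h r \<le> fst z r"
proof -
  have "fst h s \<le> fst z r" if "r < s" for s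
  proof -
    have "fst h s \<le> pcompl (snd h s)" using IC_r1[OF h, of s s] by (intro pc_le) simp
    also have "\<dots> \<le> pcompl (snd z s)" by (rule pc_anti[OF F le])
    also have "\<dots> \<le> fst z r" by (rule Hbar_2[OF z that])
    finally show ?thesis .
  qed
  then have "Sup (fst h ` {s. r < s}) \<le> fst z r" by (auto intro!: Sup_least)
  then show ?thesis using IC_r3[OF h, of r] by (simp only:)
qed



definition negf :: "'a ic \<Rightarrow> 'a ic" where
  "negf f = (\<lambda>r. snd f (-r), \<lambda>s. fst f (-s))"

lemma neg_img: "(\<lambda>s. g (- s)) ` {s. (r::rat) < s} = g ` {x. x < -r}"
proof -
  have "{x. x < -r} = uminus ` {s::rat. r < s}"
    by (rule set_eqI) (auto simp: image_iff, metis minus_less_iff minus_minus)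
  then show ?thesis by (simp add: image_image)
qed

lemma neg_img2: "(\<lambda>s. g (- s)) ` {s. s < (r::rat)} = g ` {x. -r < x}"
proof -
  have "{x. -r < x} = uminus ` {s::rat. s < r}"
    by (rule set_eqI) (auto simp: image_iff, metis less_minus_iff minus_minus)
  then show ?thesis by (simp add: image_image)
qed

lemma neg_Cbar:
  assumes c: "c \<in> Cbar"
  shows "negf c \<in> Cbar"
proof -
  have ic: "c \<in> IC" using c by (simp add: Cbar_def)
  have r1: "inf (snd c (-r)) (fst c (-s)) = bot" if "s \<le> r" for r s
    using IC_r1[OF ic, of "-r" "-s"] that by (simp add: inf_commute)
  have r3: "snd c (-r) = Sup ((\<lambda>s. snd c (-s)) ` {s. r < s})" for r
    unfolding neg_img using IC_r4[OF ic, of "-r"] .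
  have r4: "fst c (-s) = Sup ((\<lambda>r. fst c (-r)) ` {r. r < s})" for s
    unfolding neg_img2 using IC_r3[OF ic, of "-s"] .
  have cb: "sup (snd c (-r)) (fst c (-s)) = top" if "r < s" for r s
    using c that unfolding Cbar_def by (simp add: sup_commute)
  have "negf c \<in> IC"
    unfolding IC_iff negf_def fst_conv snd_conv using r1 r3 r4 by blast
  then show ?thesis unfolding Cbar_def negf_def using cb by simp
qed

lemma negf_simps: "fst (negf c) r = snd c (-r)" "snd (negf c) s = fst c (-s)"
  by (simp_all add: negf_def)



lemma urysohn:
  assumes F: "is_frame TYPE('a::complete_lattice)"
    and cb: "completely_below a (b::'a)" and rs: "r < s"
  shows "\<exists>c\<in>Cbar. (\<forall>t. fst c t \<le> b) \<and> (\<forall>t. s \<le> t \<longrightarrow> fst c t = bot) \<and> a \<le> fst c r"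
proof -
  obtain e :: "rat \<Rightarrow> 'a" where e0: "e 0 = a" and e1: "e 1 = b"
    and erb: "\<And>p q. 0 \<le> p \<Longrightarrow> p < q \<Longrightarrow> q \<le> 1 \<Longrightarrow> rather_below (e p) (e q)"
    using cb unfolding completely_below_def by blast
  have ele: "e p \<le> e q" if "0 \<le> p" "p < q" "q \<le> 1" for p q using rb_le[OF F erb[OF that]] .
  define \<phi> :: "rat \<Rightarrow> rat" where "\<phi> q = s - q / (1 - q)" for q
  have phimono: "\<phi> q' < \<phi> q" if "0 \<le> q" "q < q'" "q' < 1" for q q'
  proof -
    have "q / (1 - q) < q' / (1 - q')" using that by (simp add: field_simps)
    then show ?thesis by (simp add: \<phi>_def)
  qed
  have phile: "\<phi> q \<le> s" if "0 \<le> q" "q < 1" for q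
    using that by (simp add: \<phi>_def)
  have phi0: "\<phi> 0 = s" by (simp add: \<phi>_def)
  have phisurj: "\<exists>q. 0 < q \<and> q < 1 \<and> \<phi> q = t" if "t < s" for t
  proof (intro exI conjI)
    let ?q = "(s - t) / (1 + s - t)"
    show "0 < ?q" using that by simp
    show "?q < 1" using that by simp
    have "1 - ?q = 1 / (1 + s - t)" using that by (simp add: field_simps)
    then show "\<phi> ?q = t" using that by (simp add: \<phi>_def field_simps)
  qed
  have phirev: "q < q'" if "0 \<le> q" "q < 1" "0 \<le> q'" "q' < 1" "\<phi> q' < \<phi> q" for q q'
  proof (rule ccontr)
    assume "\<not> q < q'"
    then have "q' = q \<or> q' < q" by auto
    then show False using phimono[of q' q] that by auto
  qed
  define U where "U t = Sup {e q | q. 0 \<le> q \<and> q < 1 \<and> t < \<phi> q}" for t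
  define D where "D t = sup (Sup {pcompl (e q) | q. 0 < q \<and> q < 1 \<and> \<phi> q < t})
                          (if s < t then top else bot)" for t
  have Ut: "U t = Sup {e q | q. 0 \<le> q \<and> q < 1 \<and> t < \<phi> q}" for t by (simp add: U_def)
  have Dt: "D t = sup (Sup {pcompl (e q) | q. 0 < q \<and> q < 1 \<and> \<phi> q < t})
                          (if s < t then top else bot)" for t by (simp add: D_def)
  have Ule: "U t \<le> b" for t
    unfolding Ut
  proof (rule Sup_least)
    fix x assume "x \<in> {e q | q. 0 \<le> q \<and> q < 1 \<and> t < \<phi> q}"
    then obtain q where "x = e q" "0 \<le> q" "q < 1" by blast
    then show "x \<le> b" using ele[of q 1] e1 by simp
  qed
  have Ubot: "U t = bot" if "s \<le> t" for t
  proof -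
    have E: "{e q | q. 0 \<le> q \<and> q < 1 \<and> t < \<phi> q} = {}"
      using phile that by force
    show ?thesis unfolding Ut E by simp
  qed
  have aU: "a \<le> U r"
    unfolding Ut using rs phi0 e0 by (intro Sup_upper) force
  have Umono: "U t' \<le> U t" if "t \<le> t'" for t t'
    unfolding Ut using that by (intro Sup_subset_mono) force
  have Dmono: "D t \<le> D t'" if "t \<le> t'" for t t'
    unfolding Dt using that by (intro sup_mono Sup_subset_mono) auto
  have Ur1: "inf (U t) (D t') = bot" if "t' \<le> t" for t t'
  proof (cases "s < t'")
    case True
    then show ?thesis using Ubot[of t] that by simp
  next
    case False
    then have "D t' = Sup {pcompl (e q) | q. 0 < q \<and> q < 1 \<and> \<phi> q < t'}" unfolding Dt by simp
    moreover have "inf (U t) (Sup {pcompl (e q) | q. 0 < q \<and> q < 1 \<and> \<phi> q < t'}) = bot"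
      unfolding Ut
    proof (rule Sup_Sup_bot[OF F])
      fix x y assume "x \<in> {e q | q. 0 \<le> q \<and> q < 1 \<and> t < \<phi> q}"
        "y \<in> {pcompl (e q) | q. 0 < q \<and> q < 1 \<and> \<phi> q < t'}"
      then obtain q q' where q: "x = e q" "0 \<le> q" "q < 1" "t < \<phi> q"
        and q': "y = pcompl (e q')" "0 < q'" "q' < 1" "\<phi> q' < t'" by blast
      have "q < q'" using phirev[of q q'] q q' that by auto
      then have "e q \<le> e q'" using ele q q' by auto
      then have "inf x y \<le> inf (e q') (pcompl (e q'))" using q q' by (simp add: le_infI1)
      also have "\<dots> = bot" using pc_inf[OF F, of "e q'"] by (simp add: inf_commute)
      finally show "inf x y = bot" by (simp add: bot_unique)
    qed
    ultimately show ?thesis by simp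
  qed
  have Ur3: "U t = Sup (U ` {x. t < x})" for t
  proof (rule antisym)
    show "U t \<le> Sup (U ` {x. t < x})"
      unfolding Ut[of t]
    proof (rule Sup_least)
      fix x assume "x \<in> {e q | q. 0 \<le> q \<and> q < 1 \<and> t < \<phi> q}"
      then obtain q where q: "x = e q" "0 \<le> q" "q < 1" "t < \<phi> q" by blast
      define m where "m = (t + \<phi> q) / 2"
      have m: "t < m" "m < \<phi> q" using q(4) by (simp_all add: m_def field_simps)
      have "x \<le> U m" unfolding Ut using q m by (intro Sup_upper) blast
      also have "U m \<le> Sup (U ` {x. t < x})" using m by (intro Sup_upper) blast
      finally show "x \<le> Sup (U ` {x. t < x})" .
    qed
    show "Sup (U ` {x. t < x}) \<le> U t" using Umono by (auto intro!: Sup_least)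
  qed
  have Dr4: "D t = Sup (D ` {x. x < t})" for t
  proof (rule antisym)
    show "D t \<le> Sup (D ` {x. x < t})"
      unfolding Dt[of t]
    proof (rule sup_least)
      show "Sup {pcompl (e q) | q. 0 < q \<and> q < 1 \<and> \<phi> q < t} \<le> Sup (D ` {x. x < t})"
      proof (rule Sup_least)
        fix x assume "x \<in> {pcompl (e q) | q. 0 < q \<and> q < 1 \<and> \<phi> q < t}"
        then obtain q where q: "x = pcompl (e q)" "0 < q" "q < 1" "\<phi> q < t" by blast
        define m where "m = (t + \<phi> q) / 2"
        have m: "m < t" "\<phi> q < m" using q(4) by (simp_all add: m_def field_simps)
        have "x \<le> Sup {pcompl (e q) | q. 0 < q \<and> q < 1 \<and> \<phi> q < m}"
          using q m by (intro Sup_upper) blast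
        also have "\<dots> \<le> D m" unfolding Dt[of m] by simp
        also have "D m \<le> Sup (D ` {x. x < t})" using m by (intro Sup_upper) blast
        finally show "x \<le> Sup (D ` {x. x < t})" .
      qed
      show "(if s < t then top else bot) \<le> Sup (D ` {x. x < t})"
      proof (cases "s < t")
        case True
        define m where "m = (t + s) / 2"
        have m: "m < t" "s < m" using True by (simp_all add: m_def field_simps)
        have "top \<le> D m" unfolding Dt[of m] using m by simp
        also have "D m \<le> Sup (D ` {x. x < t})" using m by (intro Sup_upper) blast
        finally show ?thesis by simp
      qed simp
    qed
    show "Sup (D ` {x. x < t}) \<le> D t" using Dmono by (auto intro!: Sup_least)
  qed
  have UDtop: "sup (U t) (D t') = top" if "t < t'" for t t'
  proof (cases "s < t'")
    case True
    then show ?thesis unfolding Dt by simp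
  next
    case False
    define m1 where "m1 = t + (t' - t) / 3"
    define m2 where "m2 = t + 2 * (t' - t) / 3"
    have m: "t < m1" "m1 < m2" "m2 < t'" using that by (simp_all add: m1_def m2_def field_simps)
    obtain q where q: "0 < q" "q < 1" "\<phi> q = m1" using phisurj[of m1] m False by auto
    obtain q' where q': "0 < q'" "q' < 1" "\<phi> q' = m2" using phisurj[of m2] m False by auto
    have "q' < q" using phirev[of q' q] q q' m by auto
    then have rb: "sup (pcompl (e q')) (e q) = top" using erb[of q' q] q q'
      unfolding rather_below_def by auto
    have "e q \<le> U t" unfolding Ut using q m by (intro Sup_upper) force
    moreover have "pcompl (e q') \<le> D t'"
    proof -
      have "pcompl (e q') \<le> Sup {pcompl (e q) | q. 0 < q \<and> q < 1 \<and> \<phi> q < t'}"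
        using q' m by (intro Sup_upper) force
      also have "\<dots> \<le> D t'" unfolding Dt[of t'] by simp
      finally show ?thesis .
    qed
    ultimately have "sup (pcompl (e q')) (e q) \<le> sup (U t) (D t')"
      by (simp add: le_supI1 le_supI2)
    then show ?thesis using rb by (simp add: top_unique)
  qed
  define c where "c = (U, D)"
  have "c \<in> IC"
    unfolding IC_iff c_def fst_conv snd_conv using Ur1 Ur3 Dr4 by blast
  then have "c \<in> Cbar" unfolding Cbar_def c_def using UDtop by simp
  moreover have "(\<forall>t. fst c t \<le> b) \<and> (\<forall>t. s \<le> t \<longrightarrow> fst c t = bot) \<and> a \<le> fst c r"
    unfolding c_def fst_conv using Ule Ubot aU by blast
  ultimately show ?thesis by blast
qed



lemma Hbar_lub:
  assumes F: "is_frame TYPE('a::complete_lattice)" and S: "S \<subseteq> (Hbar :: 'a ic set)"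
  shows "\<exists>x. is_lub_in le_IC Hbar S x"
proof -
  define w where "w r = Sup ((\<lambda>f. fst f r) ` S)" for r
  define d where "d s = Sup {pcompl (w t) | t. t < s}" for s
  define u where "u r = Sup {pcompl (d s') | s'. r < s'}" for r
  have wr: "w r = Sup ((\<lambda>f. fst f r) ` S)" for r by (simp add: w_def)
  have ds: "d s = Sup {pcompl (w t) | t. t < s}" for s by (simp add: d_def)
  have ur: "u r = Sup {pcompl (d s') | s'. r < s'}" for r by (simp add: u_def)
  have wle: "fst f r \<le> w r" if "f \<in> S" for f r unfolding wr using that by (intro Sup_upper) blast
  have wanti: "w s \<le> w t" if "t < s" for s t
    unfolding wr[of s]
  proof (rule Sup_least)
    fix x assume "x \<in> (\<lambda>f. fst f s) ` S"
    then obtain f where f: "f \<in> S" "x = fst f s" by blast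
    then have "fst f s \<le> fst f t" using S that by (intro IC_fst_anti Hbar_IC) auto
    then show "x \<le> w t" using wle[OF f(1), of t] f by simp
  qed
  have wd: "inf (w s) (d s) = bot" for s
    unfolding ds[of s]
  proof (rule inf_Sup_bot[OF F])
    fix x assume "x \<in> {pcompl (w t) | t. t < s}"
    then obtain t where t: "x = pcompl (w t)" "t < s" by blast
    have "inf (w s) x \<le> inf (w t) (pcompl (w t))" using wanti[OF t(2)] t by (simp add: le_infI1)
    also have "\<dots> = bot" using pc_inf[OF F, of "w t"] by (simp add: inf_commute)
    finally show "inf (w s) x = bot" by (simp add: bot_unique)
  qed
  have wu: "w r \<le> u r" for r
    unfolding wr[of r]
  proof (rule Sup_least)
    fix x assume "x \<in> (\<lambda>f. fst f r) ` S"
    then obtain f where f: "f \<in> S" "x = fst f r" by blast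
    have ic: "f \<in> IC" using S f by (auto intro: Hbar_IC)
    have "Sup (fst f ` {s. r < s}) \<le> u r"
    proof (rule Sup_least)
      fix y assume "y \<in> fst f ` {s. r < s}"
      then obtain s' where s': "y = fst f s'" "r < s'" by blast
      have "y \<le> w s'" using wle[OF f(1)] s' by simp
      also have "\<dots> \<le> pcompl (d s')" by (rule pc_le[OF wd])
      also have "\<dots> \<le> u r" unfolding ur[of r] using s' by (intro Sup_upper) blast
      finally show "y \<le> u r" .
    qed
    then show "x \<le> u r" using IC_r3[OF ic, of r] f(2) by (simp only:)
  qed
  have dmono: "d s1 \<le> d s2" if "s1 \<le> s2" for s1 s2
    unfolding ds using that by (intro Sup_subset_mono) force
  have umono: "u r2 \<le> u r1" if "r1 \<le> r2" for r1 r2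
    unfolding ur using that by (intro Sup_subset_mono) force
  have r1: "inf (u r) (d s) = bot" if "s \<le> r" for r s
    unfolding ur[of r]
  proof (rule Sup_inf_bot[OF F])
    fix x assume "x \<in> {pcompl (d s') | s'. r < s'}"
    then obtain s' where s': "x = pcompl (d s')" "r < s'" by blast
    have "inf x (d s) \<le> inf (pcompl (d s')) (d s')" using dmono[of s s'] s' that
      by (simp add: le_infI2)
    also have "\<dots> = bot" by (rule pc_inf[OF F])
    finally show "inf x (d s) = bot" by (simp add: bot_unique)
  qed
  have r3: "u r = Sup (u ` {x. r < x})" for r
  proof (rule antisym)
    show "u r \<le> Sup (u ` {x. r < x})"
      unfolding ur[of r]
    proof (rule Sup_least)
      fix x assume "x \<in> {pcompl (d s') | s'. r < s'}"
      then obtain s' where s': "x = pcompl (d s')" "r < s'" by blast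
      define m where "m = (r + s') / 2"
      have m: "r < m" "m < s'" using s' by (simp_all add: m_def field_simps)
      have "x \<le> u m" unfolding ur[of m] using s' m by (intro Sup_upper) blast
      also have "u m \<le> Sup (u ` {x. r < x})" using m by (intro Sup_upper) blast
      finally show "x \<le> Sup (u ` {x. r < x})" .
    qed
    show "Sup (u ` {x. r < x}) \<le> u r" using umono by (auto intro!: Sup_least)
  qed
  have r4: "d s = Sup (d ` {x. x < s})" for s
  proof (rule antisym)
    show "d s \<le> Sup (d ` {x. x < s})"
      unfolding ds[of s]
    proof (rule Sup_least)
      fix x assume "x \<in> {pcompl (w t) | t. t < s}"
      then obtain t where t: "x = pcompl (w t)" "t < s" by blast
      define m where "m = (t + s) / 2"
      have m: "t < m" "m < s" using t by (simp_all add: m_def field_simps)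
      have "x \<le> d m" unfolding ds[of m] using t m by (intro Sup_upper) blast
      also have "d m \<le> Sup (d ` {x. x < s})" using m by (intro Sup_upper) blast
      finally show "x \<le> Sup (d ` {x. x < s})" .
    qed
    show "Sup (d ` {x. x < s}) \<le> d s" using dmono by (auto intro!: Sup_least)
  qed
  define x where "x = (u, d)"
  have xIC: "x \<in> IC" unfolding IC_iff x_def fst_conv snd_conv using r1 r3 r4 by blast
  have h1: "pcompl (u r) \<le> d s" if "r < s" for r s
  proof -
    have "pcompl (u r) \<le> pcompl (w r)" by (rule pc_anti[OF F wu])
    also have "\<dots> \<le> d s" unfolding ds[of s] using that by (intro Sup_upper) blast
    finally show ?thesis .
  qed
  have h2: "pcompl (d s) \<le> u r" if "r < s" for r s
    unfolding ur[of r] using that by (intro Sup_upper) blast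
  have xH: "x \<in> Hbar" using xIC h1 h2 unfolding Hbar_def x_def by simp
  have ub: "le_IC f x" if f: "f \<in> S" for f
  proof -
    have a: "\<And>r. fst f r \<le> fst x r" unfolding x_def fst_conv using wle[OF f] wu order_trans by blast
    have "snd x s \<le> snd f s" for s using f S by (intro lemma1[OF F _ xIC a]) auto
    then show ?thesis using a unfolding le_IC_def by blast
  qed
  have least: "le_IC x z" if z: "z \<in> Hbar" and zub: "\<forall>f\<in>S. le_IC f z" for z
  proof -
    have zIC: "z \<in> IC" using z by (rule Hbar_IC)
    have wz: "w t \<le> fst z t" for t
      unfolding wr[of t] using zub by (auto intro!: Sup_least simp: le_IC_def)
    have zd: "snd z s' \<le> d s'" for s'
    proof -
      have "Sup (snd z ` {t. t < s'}) \<le> d s'"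
      proof (rule Sup_least)
        fix y assume "y \<in> snd z ` {t. t < s'}"
        then obtain t where t: "y = snd z t" "t < s'" by blast
        have "y \<le> pcompl (fst z t)" using IC_r1[OF zIC, of t t] t
          by (intro pc_le) (simp add: inf_commute)
        also have "\<dots> \<le> pcompl (w t)" by (rule pc_anti[OF F wz])
        also have "\<dots> \<le> d s'" unfolding ds[of s'] using t by (intro Sup_upper) blast
        finally show "y \<le> d s'" .
      qed
      then show ?thesis using IC_r4[OF zIC, of s'] by (simp only:)
    qed
    have a: "fst x r \<le> fst z r" for r
      unfolding x_def fst_conv ur[of r]
    proof (rule Sup_least)
      fix y assume "y \<in> {pcompl (d s') | s'. r < s'}"
      then obtain s' where s': "y = pcompl (d s')" "r < s'" by blast
      have "y \<le> pcompl (snd z s')" using s' by (simp add: pc_anti[OF F zd])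
      also have "\<dots> \<le> fst z r" by (rule Hbar_2[OF z s'(2)])
      finally show "y \<le> fst z r" .
    qed
    have "snd z s \<le> snd x s" for s by (rule lemma1[OF F xH zIC a])
    then show ?thesis using a unfolding le_IC_def by blast
  qed
  have "is_lub_in le_IC Hbar S x" unfolding is_lub_in_def using xH ub least by blast
  then show ?thesis by blast
qed


lemma glb_from_lub:
  assumes "\<forall>S\<subseteq>Q. \<exists>x. is_lub_in le Q S x" and "S \<subseteq> Q"
  shows "\<exists>x. is_glb_in le Q S x"
proof -
  define LB where "LB = {z\<in>Q. \<forall>y\<in>S. le z y}"
  have "LB \<subseteq> Q" unfolding LB_def by blast
  then obtain x where x: "is_lub_in le Q LB x" using assms(1) by blast
  have xQ: "x \<in> Q" using x unfolding is_lub_in_def by blast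
  have xub: "\<And>z. z \<in> Q \<Longrightarrow> (\<forall>y\<in>LB. le y z) \<Longrightarrow> le x z" using x unfolding is_lub_in_def by blast
  have xlb: "\<And>y. y \<in> LB \<Longrightarrow> le y x" using x unfolding is_lub_in_def by blast
  have 1: "le x y" if "y \<in> S" for y
    using that assms(2) by (intro xub) (auto simp: LB_def)
  have 2: "le z x" if "z \<in> Q" "\<forall>y\<in>S. le z y" for z
    using that by (intro xlb) (simp add: LB_def)
  have "is_glb_in le Q S x" unfolding is_glb_in_def using xQ 1 2 by blast
  then show ?thesis by blast
qed
theorem proposition3p7:
  assumes "is_frame TYPE('a::complete_lattice)"
    and "completely_regular TYPE('a)"
  shows "Cbar \<subseteq> (Hbar :: 'a ic set) \<and> dm_completion le_IC Cbar le_IC (Hbar :: 'a ic set) id"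
proof -
  note F = assms(1)
  have CH: "Cbar \<subseteq> (Hbar :: 'a ic set)" by (rule Cbar_Hbar[OF F])
  have CR: "x = Sup {b. completely_below b x}" for x :: 'a
    using assms(2) unfolding completely_regular_def by blast
  have anti: "f = g" if "le_IC f g" "le_IC g f" for f g :: "'a ic"
  proof (rule prod_eqI)
    show "fst f = fst g" using that unfolding le_IC_def by (intro ext order_antisym) auto
    show "snd f = snd g" using that unfolding le_IC_def by (intro ext order_antisym) auto
  qed
  have po: "partial_order_on_carrier le_IC (Hbar :: 'a ic set)"
    unfolding partial_order_on_carrier_def using anti
    unfolding le_IC_def by (auto intro: order_trans)
  have lubs: "\<forall>S\<subseteq>(Hbar :: 'a ic set). \<exists>x. is_lub_in le_IC Hbar S x"
    using Hbar_lub[OF F] by blast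
  have cl: "complete_lattice_on le_IC (Hbar :: 'a ic set)"
    unfolding complete_lattice_on_def using po lubs glb_from_lub[OF lubs] by blast
  have jd: "is_lub_in le_IC Hbar {id p | p. p \<in> Cbar \<and> le_IC (id p) h} h"
    if h: "h \<in> (Hbar :: 'a ic set)" for h
  proof -
    have hIC: "h \<in> IC" using h by (rule Hbar_IC)
    have "le_IC h z" if z: "z \<in> Hbar" and zub: "\<forall>y\<in>{id p | p. p \<in> Cbar \<and> le_IC (id p) h}. le_IC y z" for z
    proof -
      have zIC: "z \<in> IC" using z by (rule Hbar_IC)
      have a: "fst h r \<le> fst z r" for r
      proof -
        have "Sup (fst h ` {s. r < s}) \<le> fst z r"
        proof (rule Sup_least)
          fix y assume "y \<in> fst h ` {s. r < s}"
          then obtain s where s: "y = fst h s" "r < s" by blast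
          have "Sup {b. completely_below b (fst h s)} \<le> fst z r"
          proof (rule Sup_least)
            fix b assume "b \<in> {b. completely_below b (fst h s)}"
            then have cb: "completely_below b (fst h s)" by simp
            obtain c where c: "c \<in> Cbar" "\<forall>t. fst c t \<le> fst h s"
              "\<forall>t. s \<le> t \<longrightarrow> fst c t = bot" "b \<le> fst c r"
              using urysohn[OF F cb s(2)] by blast
            have cf: "fst c t \<le> fst h t" for t
            proof (cases "t < s")
              case True
              then show ?thesis using c(2) IC_fst_anti[OF hIC, of t s] by (meson order_trans less_imp_le)
            next
              case False
              then show ?thesis using c(3) by simp
            qed
            have "snd h t \<le> snd c t" for t
              using c(1) CH by (intro lemma1[OF F _ hIC cf]) auto
            then have "le_IC c h" using cf unfolding le_IC_def by blast
            then have "c \<in> {id p | p. p \<in> Cbar \<and> le_IC (id p) h}" using c(1) by simp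
            then have "le_IC c z" using zub by blast
            then show "b \<le> fst z r" using c(4) unfolding le_IC_def by (meson order_trans)
          qed
          then show "y \<le> fst z r" using CR[of "fst h s"] s(1) by (simp only:)
        qed
        then show ?thesis using IC_r3[OF hIC, of r] by (simp only:)
      qed
      have "snd z s \<le> snd h s" for s by (rule lemma1[OF F h zIC a])
      then show ?thesis using a unfolding le_IC_def by blast
    qed
    moreover have "le_IC h h" unfolding le_IC_def by simp
    ultimately show ?thesis unfolding is_lub_in_def using h by auto
  qed
  have md: "is_glb_in le_IC Hbar {id p | p. p \<in> Cbar \<and> le_IC h (id p)} h"
    if h: "h \<in> (Hbar :: 'a ic set)" for h
  proof -
    have hIC: "h \<in> IC" using h by (rule Hbar_IC)
    have "le_IC z h" if z: "z \<in> Hbar" and zlb: "\<forall>y\<in>{id p | p. p \<in> Cbar \<and> le_IC h (id p)}. le_IC z y" for z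
    proof -
      have zIC: "z \<in> IC" using z by (rule Hbar_IC)
      have a: "snd h s \<le> snd z s" for s
      proof -
        have "Sup (snd h ` {r. r < s}) \<le> snd z s"
        proof (rule Sup_least)
          fix y assume "y \<in> snd h ` {r. r < s}"
          then obtain r where r: "y = snd h r" "r < s" by blast
          have "Sup {b. completely_below b (snd h r)} \<le> snd z s"
          proof (rule Sup_least)
            fix b assume "b \<in> {b. completely_below b (snd h r)}"
            then have cb: "completely_below b (snd h r)" by simp
            have "- s < - r" using r(2) by simp
            from urysohn[OF F cb this] obtain c' where c': "c' \<in> Cbar" "\<forall>t. fst c' t \<le> snd h r"
              "\<forall>t. - r \<le> t \<longrightarrow> fst c' t = bot" "b \<le> fst c' (- s)"
              by blast
            define c where "c = negf c'"
            have cC: "c \<in> Cbar" unfolding c_def by (rule neg_Cbar[OF c'(1)])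
            have cf: "snd c t \<le> snd h t" for t
            proof (cases "r < t")
              case True
              then show ?thesis using c'(2) IC_snd_mono[OF hIC, of r t]
                unfolding c_def negf_simps by (meson order_trans less_imp_le)
            next
              case False
              then show ?thesis using c'(3) unfolding c_def negf_simps by simp
            qed
            have "fst h t \<le> fst c t" for t
              using cC CH by (intro lemma2[OF F _ hIC cf]) auto
            then have "le_IC h c" using cf unfolding le_IC_def by blast
            then have "c \<in> {id p | p. p \<in> Cbar \<and> le_IC h (id p)}" using cC by simp
            then have "le_IC z c" using zlb by blast
            then have "snd c s \<le> snd z s" unfolding le_IC_def by blast
            then show "b \<le> snd z s" using c'(4) unfolding c_def negf_simps by (meson order_trans)
          qed
          then show "y \<le> snd z s" using CR[of "snd h r"] r(1) by (simp only:)
        qed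
        then show ?thesis using IC_r4[OF hIC, of s] by (simp only:)
      qed
      have "fst z r \<le> fst h r" for r by (rule lemma2[OF F h zIC a])
      then show ?thesis using a unfolding le_IC_def by blast
    qed
    moreover have "le_IC h h" unfolding le_IC_def by simp
    ultimately show ?thesis unfolding is_glb_in_def using h by auto
  qed
  have "dm_completion le_IC Cbar le_IC (Hbar :: 'a ic set) id"
    unfolding dm_completion_def using cl CH jd md by auto
  then show ?thesis using CH by blast
qed

end
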